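(* Let $H$ be a standard finitary set functor with presentation $\varepsilon\colon H_\Sigma\to H$, let $Y$ be a set, and assume that the free corecursive $H$-algebra $(CY,\psi_Y)$ on $Y$ is a cia for $H$. Let $e\colon X\to H_\Sigma X+Y$ be any map, let $e^{\ddagger}\colon X\to T_\Sigma Y$ be the unique map with $e^{\ddagger}=[\tau^\Sigma_Y,\eta^\Sigma_Y]\cdot(H_\Sigma e^{\ddagger}+Y)\cdot e$, put $\bar e=(\varepsilon_X+\eta^C_Y)\cdot e\colon X\to HX+CY$, and let $\bar e^\dagger\colon X\to CY$ be its unique solution in the cia $CY$. Then $$m_Y\cdot\bar e^\dagger=\hat\varepsilon_Y\cdot e^{\ddagger}\colon X\to TY.$$
   Context: Finitary set functor: $HX=\bigcup HY$ over finite $Y\subseteq X$; standard: preserves inclusions and finite intersections. $H_\Sigma X=\coprod_n\Sigma_n\times X^n$; a presentation is a natural transformation $\varepsilon\colon H_\Sigma\to H$ with surjective components. An algebra $a\colon GA\to A$ for an endofunctor $G$ is corecursive if every coalgebra $c\colon Z\to GZ$ admits a unique $s$ with $s=a\cdot Gs\cdot c$; it is a cia if every $f\colon Z\to GZ+A$ admits a unique solution $s$ with $s=[a,\mathrm{id}_A]\cdot(Gs+\mathrm{id}_A)\cdot f$. $T_\Sigma Y$ is the set of all (possibly infinite) $\Sigma$-trees over $Y$ (leaves labeled by constants or elements of $Y$), with tree-tupling structure $\tau^\Sigma_Y\colon H_\Sigma T_\Sigma Y\to T_\Sigma Y$ and $\eta^\Sigma_Y\colon Y\to T_\Sigma Y$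 the singleton trees; it is the free cia for $H_\Sigma$ on $Y$. $(TY,\tau_Y)$ with $\eta_Y\colon Y\to TY$ is the free cia for $H$ on $Y$ (the terminal coalgebra of $H(-)+Y$). $(CY,\psi_Y)$ with $\eta^C_Y\colon Y\to CY$ is the free corecursive $H$-algebra on $Y$, and $m_Y\colon CY\to TY$ is the unique $H$-algebra morphism with $m_Y\cdot\eta^C_Y=\eta_Y$. $\hat\varepsilon_Y\colon T_\Sigma Y\to TY$ is the unique $H_\Sigma$-algebra morphism from $(T_\Sigma Y,\tau^\Sigma_Y)$ to $(TY,\tau_Y\cdot\varepsilon_{TY})$ with $\hat\varepsilon_Y\cdot\eta^\Sigma_Y=\eta_Y$ (it is surjective, the canonical quotient). *)

theory Defs
  imports Main "HOL-Library.FuncSet"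
begin

(* Set functors are modelled on the subsets of a universe type 'u:
   Hob X is the object H X (a set of elements of type 'h), and
   Hmap f acts on H X for any map f defined on X. *)

definition set_functor :: "('u set \<Rightarrow> 'h set) \<Rightarrow> (('u \<Rightarrow> 'u) \<Rightarrow> 'h \<Rightarrow> 'h) \<Rightarrow> bool" where
  "set_functor Hob Hmap \<longleftrightarrow>
     (\<forall>X Y f. f \<in> X \<rightarrow> Y \<longrightarrow> Hmap f \<in> Hob X \<rightarrow> Hob Y) \<and>
     (\<forall>X f g. (\<forall>x\<in>X. f x = g x) \<longrightarrow> (\<forall>h\<in>Hob X. Hmap f h = Hmap g h)) \<and>
     (\<forall>X. \<forall>h\<in>Hob X. Hmap id h = h) \<and>
     (\<forall>X Y f g. f \<in> X \<rightarrow> Y \<longrightarrow> (\<forall>h\<in>Hob X. Hmap (g \<circ> f) h = Hmap g (Hmap f h)))"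

text \<open>Standard: preserves inclusions (the inclusion map is sent to the inclusion, since
  Hmap id is the identity) and finite intersections.\<close>
definition standard_functor :: "('u set \<Rightarrow> 'h set) \<Rightarrow> (('u \<Rightarrow> 'u) \<Rightarrow> 'h \<Rightarrow> 'h) \<Rightarrow> bool" where
  "standard_functor Hob Hmap \<longleftrightarrow> set_functor Hob Hmap \<and>
     (\<forall>X Y. X \<subseteq> Y \<longrightarrow> Hob X \<subseteq> Hob Y) \<and>
     (\<forall>X Y. Hob (X \<inter> Y) = Hob X \<inter> Hob Y)"

definition finitary :: "('u set \<Rightarrow> 'h set) \<Rightarrow> bool" where
  "finitary Hob \<longleftrightarrow> (\<forall>X. Hob X = (\<Union>Z\<in>{Z. Z \<subseteq> X \<and> finite Z}. Hob Z))"

definition HS :: "'s set \<Rightarrow> ('s \<Rightarrow> nat) \<Rightarrow> 'a set \<Rightarrow> ('s \<times> 'a list) set" where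
  "HS Sig ar X = {(\<sigma>, xs). \<sigma> \<in> Sig \<and> length xs = ar \<sigma> \<and> set xs \<subseteq> X}"

definition HSmap :: "('a \<Rightarrow> 'b) \<Rightarrow> 's \<times> 'a list \<Rightarrow> 's \<times> 'b list" where
  "HSmap f p = (fst p, map f (snd p))"

definition presentation ::
  "'s set \<Rightarrow> ('s \<Rightarrow> nat) \<Rightarrow> ('u set \<Rightarrow> 'h set) \<Rightarrow> (('u \<Rightarrow> 'u) \<Rightarrow> 'h \<Rightarrow> 'h)
   \<Rightarrow> ('u set \<Rightarrow> 's \<times> 'u list \<Rightarrow> 'h) \<Rightarrow> bool" where
  "presentation Sig ar Hob Hmap eps \<longleftrightarrow>
     (\<forall>X. eps X \<in> HS Sig ar X \<rightarrow> Hob X \<and> eps X ` HS Sig ar X = Hob X) \<and>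
     (\<forall>X Y f. f \<in> X \<rightarrow> Y \<longrightarrow>
        (\<forall>p\<in>HS Sig ar X. Hmap f (eps X p) = eps Y (HSmap f p)))"

codatatype ('s, 'y) stree = Leaf 'y | Node 's "('s, 'y) stree list"

coinductive_set TS :: "'s set \<Rightarrow> ('s \<Rightarrow> nat) \<Rightarrow> 'y set \<Rightarrow> ('s, 'y) stree set"
  for Sig ar Y where
  leaf: "y \<in> Y \<Longrightarrow> Leaf y \<in> TS Sig ar Y"
| node: "\<sigma> \<in> Sig \<Longrightarrow> length ts = ar \<sigma> \<Longrightarrow> (\<forall>t\<in>set ts. t \<in> TS Sig ar Y) \<Longrightarrow> Node \<sigma> ts \<in> TS Sig ar Y"

definition tauS :: "'s \<times> ('s, 'y) stree list \<Rightarrow> ('s, 'y) stree" where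
  "tauS p = Node (fst p) (snd p)"

definition H_alg :: "('u set \<Rightarrow> 'h set) \<Rightarrow> 'u set \<Rightarrow> ('h \<Rightarrow> 'u) \<Rightarrow> bool" where
  "H_alg Hob A a \<longleftrightarrow> a \<in> Hob A \<rightarrow> A"

definition alg_hom :: "('u set \<Rightarrow> 'h set) \<Rightarrow> (('u \<Rightarrow> 'u) \<Rightarrow> 'h \<Rightarrow> 'h)
   \<Rightarrow> 'u set \<Rightarrow> ('h \<Rightarrow> 'u) \<Rightarrow> 'u set \<Rightarrow> ('h \<Rightarrow> 'u) \<Rightarrow> ('u \<Rightarrow> 'u) \<Rightarrow> bool" where
  "alg_hom Hob Hmap A a B b h \<longleftrightarrow> h \<in> A \<rightarrow> B \<and> (\<forall>x\<in>Hob A. h (a x) = b (Hmap h x))"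

definition corecursive :: "('u set \<Rightarrow> 'h set) \<Rightarrow> (('u \<Rightarrow> 'u) \<Rightarrow> 'h \<Rightarrow> 'h)
   \<Rightarrow> 'u set \<Rightarrow> ('h \<Rightarrow> 'u) \<Rightarrow> bool" where
  "corecursive Hob Hmap A a \<longleftrightarrow> H_alg Hob A a \<and>
     (\<forall>Z c. c \<in> Z \<rightarrow> Hob Z \<longrightarrow>
        (\<exists>s\<in>Z \<rightarrow> A. (\<forall>z\<in>Z. s z = a (Hmap s (c z))) \<and>
           (\<forall>s'\<in>Z \<rightarrow> A. (\<forall>z\<in>Z. s' z = a (Hmap s' (c z))) \<longrightarrow> (\<forall>z\<in>Z. s' z = s z))))"

definition is_solution :: "('u set \<Rightarrow> 'h set) \<Rightarrow> (('u \<Rightarrow> 'u) \<Rightarrow> 'h \<Rightarrow> 'h)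
   \<Rightarrow> 'u set \<Rightarrow> 'u set \<Rightarrow> ('h \<Rightarrow> 'u) \<Rightarrow> ('u \<Rightarrow> 'h + 'u) \<Rightarrow> ('u \<Rightarrow> 'u) \<Rightarrow> bool" where
  "is_solution Hob Hmap Z A a f s \<longleftrightarrow> s \<in> Z \<rightarrow> A \<and>
     (\<forall>z\<in>Z. s z = (case f z of Inl h \<Rightarrow> a (Hmap s h) | Inr x \<Rightarrow> x))"

definition cia :: "('u set \<Rightarrow> 'h set) \<Rightarrow> (('u \<Rightarrow> 'u) \<Rightarrow> 'h \<Rightarrow> 'h)
   \<Rightarrow> 'u set \<Rightarrow> ('h \<Rightarrow> 'u) \<Rightarrow> bool" where
  "cia Hob Hmap A a \<longleftrightarrow> H_alg Hob A a \<and>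
     (\<forall>Z f. f \<in> Z \<rightarrow> Hob Z <+> A \<longrightarrow>
        (\<exists>s. is_solution Hob Hmap Z A a f s \<and>
           (\<forall>s'. is_solution Hob Hmap Z A a f s' \<longrightarrow> (\<forall>z\<in>Z. s' z = s z))))"

definition free_corecursive :: "('u set \<Rightarrow> 'h set) \<Rightarrow> (('u \<Rightarrow> 'u) \<Rightarrow> 'h \<Rightarrow> 'h)
   \<Rightarrow> 'y set \<Rightarrow> 'u set \<Rightarrow> ('h \<Rightarrow> 'u) \<Rightarrow> ('y \<Rightarrow> 'u) \<Rightarrow> bool" where
  "free_corecursive Hob Hmap Y C psi etaC \<longleftrightarrow>
     corecursive Hob Hmap C psi \<and> etaC \<in> Y \<rightarrow> C \<and>
     (\<forall>A a f. corecursive Hob Hmap A a \<and> f \<in> Y \<rightarrow> A \<longrightarrow>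
        (\<exists>h. alg_hom Hob Hmap C psi A a h \<and> (\<forall>y\<in>Y. h (etaC y) = f y) \<and>
           (\<forall>h'. alg_hom Hob Hmap C psi A a h' \<and> (\<forall>y\<in>Y. h' (etaC y) = f y)
                 \<longrightarrow> (\<forall>x\<in>C. h' x = h x))))"

definition free_cia :: "('u set \<Rightarrow> 'h set) \<Rightarrow> (('u \<Rightarrow> 'u) \<Rightarrow> 'h \<Rightarrow> 'h)
   \<Rightarrow> 'y set \<Rightarrow> 'u set \<Rightarrow> ('h \<Rightarrow> 'u) \<Rightarrow> ('y \<Rightarrow> 'u) \<Rightarrow> bool" where
  "free_cia Hob Hmap Y T tau eta \<longleftrightarrow>
     cia Hob Hmap T tau \<and> eta \<in> Y \<rightarrow> T \<and>
     (\<forall>A a f. cia Hob Hmap A a \<and> f \<in> Y \<rightarrow> A \<longrightarrow>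
        (\<exists>h. alg_hom Hob Hmap T tau A a h \<and> (\<forall>y\<in>Y. h (eta y) = f y) \<and>
           (\<forall>h'. alg_hom Hob Hmap T tau A a h' \<and> (\<forall>y\<in>Y. h' (eta y) = f y)
                 \<longrightarrow> (\<forall>x\<in>T. h' x = h x))))"

end

theory Submission
  imports Defs
begin

lemma fcomp: "g \<in> B \<rightarrow> C \<Longrightarrow> f \<in> A \<rightarrow> B \<Longrightarrow> g \<circ> f \<in> A \<rightarrow> C"
  by (auto simp: Pi_def)
lemma sf_fun: assumes "set_functor Hob Hmap" "f \<in> X \<rightarrow> Y" shows "Hmap f \<in> Hob X \<rightarrow> Hob Y"
proof -
  have "\<forall>X Y f. f \<in> X \<rightarrow> Y \<longrightarrow> Hmap f \<in> Hob X \<rightarrow> Hob Y"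
    using assms(1) unfolding set_functor_def by (rule conjunct1)
  from this[rule_format, OF assms(2)] show ?thesis .
qed
lemma sf_comp: assumes "set_functor Hob Hmap" "f \<in> X \<rightarrow> Y" "h \<in> Hob X" shows "Hmap (g \<circ> f) h = Hmap g (Hmap f h)"
proof -
  have "\<forall>X Y f g. f \<in> X \<rightarrow> Y \<longrightarrow> (\<forall>h\<in>Hob X. Hmap (g \<circ> f) h = Hmap g (Hmap f h))"
    using assms(1) unfolding set_functor_def by (elim conjE)
  from this[rule_format, OF assms(2) assms(3)] show ?thesis .
qed
lemma pr_fun: assumes "presentation Sig ar Hob Hmap eps" shows "eps X \<in> HS Sig ar X \<rightarrow> Hob X"
proof -
  have "\<forall>X. eps X \<in> HS Sig ar X \<rightarrow> Hob X \<and> eps X ` HS Sig ar X = Hob X"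
    using assms unfolding presentation_def by (rule conjunct1)
  then show ?thesis by (rule allE) (erule conjunct1)
qed
lemma pr_nat: assumes "presentation Sig ar Hob Hmap eps" "f \<in> X \<rightarrow> Y" "p \<in> HS Sig ar X"
  shows "Hmap f (eps X p) = eps Y (HSmap f p)"
proof -
  have "\<forall>X Y f. f \<in> X \<rightarrow> Y \<longrightarrow>
        (\<forall>p\<in>HS Sig ar X. Hmap f (eps X p) = eps Y (HSmap f p))"
    using assms(1) unfolding presentation_def by (rule conjunct2)
  from this[rule_format, OF assms(2) assms(3)] show ?thesis .
qed
lemma fc_cia1: assumes "free_cia Hob Hmap Y T tau eta" shows "cia Hob Hmap T tau"
  using assms unfolding free_cia_def by (rule conjunct1)
lemma fc_cia2: assumes "free_cia Hob Hmap Y T tau eta" shows "eta \<in> Y \<rightarrow> T"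
  using assms unfolding free_cia_def by (elim conjE)
lemma fcor_eta: assumes "free_corecursive Hob Hmap Y C psi etaC" shows "etaC \<in> Y \<rightarrow> C"
  using assms unfolding free_corecursive_def by (elim conjE)
lemma ah_fun: assumes "alg_hom Hob Hmap A a B b h" shows "h \<in> A \<rightarrow> B"
  using assms unfolding alg_hom_def by (rule conjunct1)
lemma ah_eq: assumes "alg_hom Hob Hmap A a B b h" "x \<in> Hob A" shows "h (a x) = b (Hmap h x)"
proof -
  have "\<forall>x\<in>Hob A. h (a x) = b (Hmap h x)" using assms(1) unfolding alg_hom_def by (rule conjunct2)
  from this[rule_format, OF assms(2)] show ?thesis .
qed
lemma sol_fun: assumes "is_solution Hob Hmap Z A a f s" shows "s \<in> Z \<rightarrow> A"
  using assms unfolding is_solution_def by (rule conjunct1)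
lemma sol_eq: assumes "is_solution Hob Hmap Z A a f s" "z \<in> Z"
  shows "s z = (case f z of Inl h \<Rightarrow> a (Hmap s h) | Inr x \<Rightarrow> x)"
proof -
  have "\<forall>z\<in>Z. s z = (case f z of Inl h \<Rightarrow> a (Hmap s h) | Inr x \<Rightarrow> x)"
    using assms(1) unfolding is_solution_def by (rule conjunct2)
  from this[rule_format, OF assms(2)] show ?thesis .
qed
lemma cia_uniq: assumes "cia Hob Hmap A a" "f \<in> Z \<rightarrow> Hob Z <+> A"
  "is_solution Hob Hmap Z A a f s1" "is_solution Hob Hmap Z A a f s2" "z \<in> Z"
  shows "s1 z = s2 z"
proof -
  have "\<forall>Z f. f \<in> Z \<rightarrow> Hob Z <+> A \<longrightarrow>
        (\<exists>s. is_solution Hob Hmap Z A a f s \<and>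
           (\<forall>s'. is_solution Hob Hmap Z A a f s' \<longrightarrow> (\<forall>z\<in>Z. s' z = s z)))"
    using assms(1) unfolding cia_def by (rule conjunct2)
  from this[rule_format, OF assms(2)] obtain s where
    u: "\<forall>s'. is_solution Hob Hmap Z A a f s' \<longrightarrow> (\<forall>z\<in>Z. s' z = s z)" by (elim exE conjE)
  have "s1 z = s z" using u[rule_format, OF assms(3) assms(5)] .
  moreover have "s2 z = s z" using u[rule_format, OF assms(4) assms(5)] .
  ultimately show ?thesis by simp
qed

theorem mainTheorem10:
  fixes Hob :: "'u set \<Rightarrow> 'h set" and Hmap :: "('u \<Rightarrow> 'u) \<Rightarrow> 'h \<Rightarrow> 'h"
    and Sig :: "'s set" and ar :: "'s \<Rightarrow> nat"
    and eps :: "'u set \<Rightarrow> 's \<times> 'u list \<Rightarrow> 'h"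
    and Y :: "'y set"
    and C :: "'u set" and psi :: "'h \<Rightarrow> 'u" and etaC :: "'y \<Rightarrow> 'u"
    and T :: "'u set" and tau :: "'h \<Rightarrow> 'u" and eta :: "'y \<Rightarrow> 'u"
    and m :: "'u \<Rightarrow> 'u" and epshat :: "('s, 'y) stree \<Rightarrow> 'u"
    and X :: "'u set" and e :: "'u \<Rightarrow> ('s \<times> 'u list) + 'y"
    and edd :: "'u \<Rightarrow> ('s, 'y) stree" and sol :: "'u \<Rightarrow> 'u"
  assumes H_std: "standard_functor Hob Hmap"
    and H_fin: "finitary Hob"
    and pres: "presentation Sig ar Hob Hmap eps"
    and C_free: "free_corecursive Hob Hmap Y C psi etaC"
    and C_cia: "cia Hob Hmap C psi"
    and T_free: "free_cia Hob Hmap Y T tau eta"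
    and m_hom: "alg_hom Hob Hmap C psi T tau m"
    and m_eta: "\<forall>y\<in>Y. m (etaC y) = eta y"
    and epshat_fun: "epshat \<in> TS Sig ar Y \<rightarrow> T"
    and epshat_hom: "\<forall>p\<in>HS Sig ar (TS Sig ar Y). epshat (tauS p) = tau (eps T (HSmap epshat p))"
    and epshat_eta: "\<forall>y\<in>Y. epshat (Leaf y) = eta y"
    and e_fun: "e \<in> X \<rightarrow> HS Sig ar X <+> Y"
    and edd_fun: "edd \<in> X \<rightarrow> TS Sig ar Y"
    and edd_eq: "\<forall>x\<in>X. edd x = (case e x of Inl p \<Rightarrow> tauS (HSmap edd p) | Inr y \<Rightarrow> Leaf y)"
    and sol: "is_solution Hob Hmap X C psi (map_sum (eps X) etaC \<circ> e) sol"
  shows "\<forall>x\<in>X. m (sol x) = epshat (edd x)"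
proof -
  have sf: "set_functor Hob Hmap" using H_std unfolding standard_functor_def by (rule conjunct1)
  have Tcia: "cia Hob Hmap T tau" and etafun: "eta \<in> Y \<rightarrow> T" using fc_cia1[OF T_free] fc_cia2[OF T_free] by auto
  have mfun: "m \<in> C \<rightarrow> T" by (rule ah_fun[OF m_hom])
  have solfun: "sol \<in> X \<rightarrow> C" by (rule sol_fun[OF sol])
  define f where "f = map_sum (eps X) eta \<circ> e"
  have eInl: "p \<in> HS Sig ar X" if "x \<in> X" "e x = Inl p" for x p
  proof -
    have "e x \<in> HS Sig ar X <+> Y" using e_fun that(1) by (rule funcset_mem)
    then show ?thesis using that(2) by auto
  qed
  have eInr: "y \<in> Y" if "x \<in> X" "e x = Inr y" for x y
  proof -
    have "e x \<in> HS Sig ar X <+> Y" using e_fun that(1) by (rule funcset_mem)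
    then show ?thesis using that(2) by auto
  qed
  have ffun: "f \<in> X \<rightarrow> Hob X <+> T"
  proof
    fix x assume x: "x \<in> X"
    show "f x \<in> Hob X <+> T"
    proof (cases "e x")
      case (Inl p)
      have "eps X p \<in> Hob X" using pr_fun[OF pres] eInl[OF x Inl] by (rule funcset_mem)
      then show ?thesis using Inl f_def by (simp add: InlI)
    next
      case (Inr y)
      have "eta y \<in> T" using etafun eInr[OF x Inr] by (rule funcset_mem)
      then show ?thesis using Inr f_def by (simp add: InrI)
    qed
  qed
  have s1: "is_solution Hob Hmap X T tau f (m \<circ> sol)"
    unfolding is_solution_def
  proof
    show "m \<circ> sol \<in> X \<rightarrow> T" using mfun solfun by (rule fcomp)
    show "\<forall>z\<in>X. (m \<circ> sol) z = (case f z of Inl h \<Rightarrow> tau (Hmap (m \<circ> sol) h) | Inr x \<Rightarrow> x)"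
    proof
      fix x assume x: "x \<in> X"
      show "(m \<circ> sol) x = (case f x of Inl h \<Rightarrow> tau (Hmap (m \<circ> sol) h) | Inr x \<Rightarrow> x)"
      proof (cases "e x")
        case (Inl p)
        have h: "eps X p \<in> Hob X" using pr_fun[OF pres] eInl[OF x Inl] by (rule funcset_mem)
        have hc: "Hmap sol (eps X p) \<in> Hob C" using sf_fun[OF sf solfun] h by (rule funcset_mem)
        have "m (sol x) = m (psi (Hmap sol (eps X p)))" using sol_eq[OF sol x] Inl by simp
        also have "\<dots> = tau (Hmap m (Hmap sol (eps X p)))" by (rule ah_eq[OF m_hom hc])
        also have "\<dots> = tau (Hmap (m \<circ> sol) (eps X p))" using sf_comp[OF sf solfun h, of m] by simp
        finally show ?thesis using Inl f_def by simp
      next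
        case (Inr y)
        have "m (etaC y) = eta y" using m_eta eInr[OF x Inr] by (rule bspec)
        then show ?thesis using sol_eq[OF sol x] Inr f_def by simp
      qed
    qed
  qed
  have eddT: "epshat \<circ> edd \<in> X \<rightarrow> T" using epshat_fun edd_fun by (rule fcomp)
  have s2: "is_solution Hob Hmap X T tau f (epshat \<circ> edd)"
    unfolding is_solution_def
  proof
    show "epshat \<circ> edd \<in> X \<rightarrow> T" by (rule eddT)
    show "\<forall>z\<in>X. (epshat \<circ> edd) z = (case f z of Inl h \<Rightarrow> tau (Hmap (epshat \<circ> edd) h) | Inr x \<Rightarrow> x)"
    proof
      fix x assume x: "x \<in> X"
      have ex: "edd x = (case e x of Inl p \<Rightarrow> tauS (HSmap edd p) | Inr y \<Rightarrow> Leaf y)"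
        using edd_eq x by (rule bspec)
      show "(epshat \<circ> edd) x = (case f x of Inl h \<Rightarrow> tau (Hmap (epshat \<circ> edd) h) | Inr x \<Rightarrow> x)"
      proof (cases "e x")
        case (Inl p)
        have p: "p \<in> HS Sig ar X" by (rule eInl[OF x Inl])
        have "set (map edd (snd p)) \<subseteq> TS Sig ar Y"
        proof
          fix t assume "t \<in> set (map edd (snd p))"
          then obtain z where z: "z \<in> set (snd p)" "t = edd z" by auto
          have "z \<in> X" using p z(1) unfolding HS_def by auto
          then show "t \<in> TS Sig ar Y" using edd_fun z(2) by auto
        qed
        then have hp: "HSmap edd p \<in> HS Sig ar (TS Sig ar Y)"
          using p unfolding HS_def HSmap_def by (cases p) simp
        have "epshat (edd x) = epshat (tauS (HSmap edd p))" using ex Inl by simp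
        also have "\<dots> = tau (eps T (HSmap epshat (HSmap edd p)))" using epshat_hom hp by (rule bspec)
        also have "HSmap epshat (HSmap edd p) = HSmap (epshat \<circ> edd) p" unfolding HSmap_def by simp
        also have "eps T (HSmap (epshat \<circ> edd) p) = Hmap (epshat \<circ> edd) (eps X p)"
          using pr_nat[OF pres eddT p] by simp
        finally show ?thesis using Inl f_def by simp
      next
        case (Inr y)
        have "epshat (Leaf y) = eta y" using epshat_eta eInr[OF x Inr] by (rule bspec)
        then show ?thesis using ex Inr f_def by simp
      qed
    qed
  qed
  show ?thesis
  proof
    fix x assume "x \<in> X"
    from cia_uniq[OF Tcia ffun s1 s2 this] show "m (sol x) = epshat (edd x)" by simp
  qed
qed

end
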